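(* Let $U\subseteq\mathrm{Homeo}^+(\mathbb{R})$ and let $\mathcal{F}$ be a family such that: (1) $\mathcal{F}$ is a countable set of partial injective functions from $\mathbb{R}$ to $\mathbb{R}$; (2) for every $(x,y)\in\mathbb{R}^2$ there is $\varphi\in U$ with $\varphi(x)=y$ such that for every $z\neq x$ there is some $f\in\mathcal{F}$ (with $z\in\mathrm{dom}(f)$) satisfying $\varphi(z)=f(z)$. Let $\sim$ be the equivalence relation on $\mathbb{R}$ generated by $R:=\{(u,v): \exists f\in\mathcal{F}\ f(u)=v\}$. Then there is no good $U$-anonymous weak $\mathbb{R}/\sim$-predictor.
   Context: $\mathrm{Homeo}^+(\mathbb{R})$ is the group of increasing homeomorphisms of $\mathbb{R}$. For a set $S$, a weak $S$-predictor is a function $\mathcal{P}$ from the set of $S$-valued functions $f$ with domain $\mathbb{R}\setminus\{h_f\}$ for some $h_f\in\mathbb{R}$ into $S$. It is good if for every $F:\mathbb{R}\to S$ the set $\{x:\mathcal{P}(F|_{\mathbb{R}\setminus\{x\}})\neq F(x)\}$ has Lebesgue measure zero. It is $U$-anonymous if whenever $f,g$ are such functions with holes $h_f,h_g$, $\varphi\in U$, $\varphi(h_f)=h_g$, and $f=(g\circ\varphi)|_{\mathbb{R}\setminus\{h_f\}}$, then $\mathcal{P}(f)=\mathcal{P}(g)$. *)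

theory Defs
  imports "HOL-Analysis.Analysis"
begin

definition Homeo_plus :: "(real \<Rightarrow> real) set" where
  "Homeo_plus = {\<phi>. (\<exists>\<psi>. homeomorphism UNIV UNIV \<phi> \<psi>) \<and> mono \<phi>}"

definition holed_fun :: "'a set \<Rightarrow> real \<Rightarrow> (real \<Rightarrow> 'a option) \<Rightarrow> bool" where
  "holed_fun S h f \<longleftrightarrow> dom f = UNIV - {h} \<and> ran f \<subseteq> S"

definition weak_predictor :: "'a set \<Rightarrow> ((real \<Rightarrow> 'a option) \<Rightarrow> 'a) \<Rightarrow> bool" where
  "weak_predictor S P \<longleftrightarrow> (\<forall>f h. holed_fun S h f \<longrightarrow> P f \<in> S)"

definition restrict_hole :: "(real \<Rightarrow> 'a) \<Rightarrow> real \<Rightarrow> (real \<Rightarrow> 'a option)" where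
  "restrict_hole F x = (\<lambda>z. if z = x then None else Some (F z))"

definition good_predictor :: "'a set \<Rightarrow> ((real \<Rightarrow> 'a option) \<Rightarrow> 'a) \<Rightarrow> bool" where
  "good_predictor S P \<longleftrightarrow>
     (\<forall>F. (\<forall>x. F x \<in> S) \<longrightarrow>
        {x. P (restrict_hole F x) \<noteq> F x} \<in> null_sets lebesgue)"

definition anonymous_predictor ::
    "(real \<Rightarrow> real) set \<Rightarrow> 'a set \<Rightarrow> ((real \<Rightarrow> 'a option) \<Rightarrow> 'a) \<Rightarrow> bool" where
  "anonymous_predictor U S P \<longleftrightarrow>
     (\<forall>f g hf hg \<phi>. holed_fun S hf f \<longrightarrow> holed_fun S hg g \<longrightarrow> \<phi> \<in> U \<longrightarrow>
        \<phi> hf = hg \<longrightarrow> (\<forall>z. z \<noteq> hf \<longrightarrow> f z = g (\<phi> z)) \<longrightarrow> P f = P g)"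

definition equiv_gen :: "(real \<times> real) set \<Rightarrow> (real \<times> real) set" where
  "equiv_gen R = (R \<union> R\<inverse>)\<^sup>*"

end

theory Submission
  imports Defs
begin

lemma class_countable:
  fixes \<F> :: "(real \<Rightarrow> real option) set"
  assumes cF: "countable \<F>" and inj: "\<forall>f\<in>\<F>. inj_on f (dom f)"
  shows "countable (equiv_gen {(u, v). \<exists>f\<in>\<F>. f u = Some v} `` {x0})"
proof -
  let ?R = "{(u, v). \<exists>f\<in>\<F>. f u = Some v}"
  have img: "countable ((?R \<union> ?R\<inverse>) `` {u})" for u
  proof -
    have "(?R \<union> ?R\<inverse>) `` {u} \<subseteq> (\<Union>f\<in>\<F>. set_option (f u)) \<union> (\<Union>f\<in>\<F>. {v. f v = Some u})"
      by auto
    moreover have "countable {v. f v = Some u}" if "f \<in> \<F>" for f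
    proof -
      have "\<exists>v0. {v. f v = Some u} \<subseteq> {v0}"
      proof (cases "\<exists>v0. f v0 = Some u")
        case True
        then obtain v0 where v0: "f v0 = Some u" by blast
        have "{v. f v = Some u} \<subseteq> {v0}"
        proof
          fix v assume "v \<in> {v. f v = Some u}"
          hence "f v = f v0" "v \<in> dom f" "v0 \<in> dom f" using v0 by auto
          thus "v \<in> {v0}" using inj that unfolding inj_on_def by auto
        qed
        thus ?thesis by blast
      qed auto
      then show ?thesis by (metis countable_empty countable_insert countable_subset)
    qed
    ultimately show ?thesis using cF
      by (metis (no_types, lifting) countable_UN countable_Un countable_subset countable_set_option)
  qed
  have "countable ((?R \<union> ?R\<inverse>)\<^sup>* `` {x0})"
  proof (rule countable_rtrancl)
    fix Y :: "real set" assume "countable Y"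
    moreover have "(?R \<union> ?R\<inverse>) `` Y = (\<Union>u\<in>Y. (?R \<union> ?R\<inverse>) `` {u})" by auto
    ultimately show "countable ((?R \<union> ?R\<inverse>) `` Y)" using img by simp
  qed simp
  then show ?thesis unfolding equiv_gen_def .
qed

theorem corollary5p3:
  fixes U :: "(real \<Rightarrow> real) set"
    and \<F> :: "(real \<Rightarrow> real option) set"
  assumes "U \<subseteq> Homeo_plus"
    and "countable \<F>"
    and "\<forall>f\<in>\<F>. inj_on f (dom f)"
    and "\<forall>x y. \<exists>\<phi>\<in>U. \<phi> x = y \<and> (\<forall>z. z \<noteq> x \<longrightarrow> (\<exists>f\<in>\<F>. f z = Some (\<phi> z)))"
  shows "\<not> (\<exists>P. weak_predictor (UNIV // equiv_gen {(u, v). \<exists>f\<in>\<F>. f u = Some v}) P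
              \<and> good_predictor (UNIV // equiv_gen {(u, v). \<exists>f\<in>\<F>. f u = Some v}) P
              \<and> anonymous_predictor U (UNIV // equiv_gen {(u, v). \<exists>f\<in>\<F>. f u = Some v}) P)"
proof
  let ?R = "{(u, v). \<exists>f\<in>\<F>. f u = Some v}"
  let ?E = "equiv_gen ?R"
  let ?S = "UNIV // ?E"
  define q where "q x = ?E `` {x}" for x
  assume "\<exists>P. weak_predictor ?S P \<and> good_predictor ?S P \<and> anonymous_predictor U ?S P"
  then obtain P where good: "good_predictor ?S P" and anon: "anonymous_predictor U ?S P" by blast
  have qS: "q x \<in> ?S" for x unfolding q_def by (simp add: quotientI)
  have Rsub: "(u, v) \<in> ?R \<Longrightarrow> q v = q u" for u v
  proof -
    assume "(u, v) \<in> ?R"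
    hence uv: "(u, v) \<in> ?E" "(v, u) \<in> ?E" unfolding equiv_gen_def by auto
    have tr: "(a, b) \<in> ?E \<Longrightarrow> (b, c) \<in> ?E \<Longrightarrow> (a, c) \<in> ?E" for a b c
      unfolding equiv_gen_def by (meson rtrancl_trans)
    show "q v = q u" unfolding q_def using uv tr by blast
  qed
  have hol: "holed_fun ?S x (restrict_hole q x)" for x
    unfolding holed_fun_def restrict_hole_def using qS
    by (auto simp: dom_def ran_def split: if_splits)
  have const: "P (restrict_hole q x) = P (restrict_hole q y)" for x y
  proof -
    obtain \<phi> where \<phi>U: "\<phi> \<in> U" and \<phi>x: "\<phi> x = y"
      and \<phi>z: "\<forall>z. z \<noteq> x \<longrightarrow> (\<exists>f\<in>\<F>. f z = Some (\<phi> z))"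
      using assms(4) by blast
    have "\<phi> \<in> Homeo_plus" using \<phi>U assms(1) by blast
    then obtain \<psi> where "homeomorphism UNIV UNIV \<phi> \<psi>" unfolding Homeo_plus_def by blast
    hence injp: "inj \<phi>" by (metis homeomorphism_def injI UNIV_I)
    show ?thesis
    proof (rule anon[unfolded anonymous_predictor_def, rule_format, OF hol hol \<phi>U \<phi>x])
      fix z assume zx: "z \<noteq> x"
      then have "\<phi> z \<noteq> y" using injp \<phi>x by (metis injD)
      moreover have "q (\<phi> z) = q z" using \<phi>z zx Rsub by blast
      ultimately show "restrict_hole q x z = restrict_hole q y (\<phi> z)"
        using zx unfolding restrict_hole_def by simp
    qed
  qed
  define c where "c = P (restrict_hole q 0)"
  have A: "{x. c \<noteq> q x} \<in> null_sets lebesgue"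
    using good qS unfolding good_predictor_def c_def
    by (metis (no_types, lifting) const restrict_hole_def Collect_cong)
  have "countable {x. c = q x}"
  proof (cases "\<exists>x0. c = q x0")
    case True
    then obtain x0 where x0: "c = q x0" by blast
    have "{x. c = q x} \<subseteq> q x0"
    proof
      fix x assume "x \<in> {x. c = q x}"
      hence "q x = q x0" using x0 by simp
      moreover have "x \<in> q x" unfolding q_def equiv_gen_def by simp
      ultimately show "x \<in> q x0" by simp
    qed
    moreover have "countable (q x0)" unfolding q_def
      using class_countable[OF assms(2) assms(3)] by blast
    ultimately show ?thesis by (rule countable_subset)
  next
    case False
    then show ?thesis by simp
  qed
  hence B: "{x. c = q x} \<in> null_sets lebesgue"
    by (metis countable_imp_null_set_lborel null_sets_completionI)
  have "UNIV = {x. c \<noteq> q x} \<union> {x. c = q x}" by auto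
  hence "UNIV \<in> null_sets (lebesgue :: real measure)" using A B by (metis null_sets.Un)
  hence "emeasure (lebesgue :: real measure) UNIV = 0" by auto
  moreover have "emeasure (lebesgue :: real measure) UNIV = emeasure lborel UNIV"
    by (simp add: emeasure_completion)
  ultimately show False by simp
qed

end
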